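(* Given $0<\alpha\le\beta<\infty$ there are positive numbers $c_0=c_0(\alpha,\beta)$, $c_1=c_1(\alpha,\beta)$ such that for every Bernstein function $g$ with rate function $r=r[g]$, \[c_0\,r(t)\le|g(z)|\le c_1\,r(t)\] whenever $t>0$ and $\operatorname{Re}z>0$ satisfy $\alpha\le t\operatorname{Re}z\le t|z|\le\beta$.
   Context: A Bernstein function $g\sim(a,b,\mu)$ is $g(z)=a+bz+\int_{(0,\infty)}(1-e^{-sz})\mu(\mathrm ds)$ ($\operatorname{Re} z>0$) with $a,b\ge0$, $\mu$ positive Radon on $(0,\infty)$, $\int\frac{s}{1+s}\mu(\mathrm ds)<\infty$. Rate function $r[g](t):=\frac a2+\frac bt+\int_{(0,\infty)}\min(s/t,1)\mu(\mathrm ds)$, $t>0$. *)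

theory Defs
  imports "HOL-Analysis.Analysis"
begin

text \<open>A Levy triple (a, b, mu): a, b >= 0, mu a positive Radon measure on (0,inf)
  (represented as a Borel measure on the reals giving no mass to (-inf,0]),
  with finite integral of s/(1+s).\<close>
definition bernstein_triple :: "real \<Rightarrow> real \<Rightarrow> real measure \<Rightarrow> bool" where
  "bernstein_triple a b \<mu> \<longleftrightarrow>
     a \<ge> 0 \<and> b \<ge> 0 \<and> sets \<mu> = sets borel \<and>
     emeasure \<mu> {..0} = 0 \<and>
     (\<forall>K. compact K \<and> K \<subseteq> {0<..} \<longrightarrow> emeasure \<mu> K < \<infinity>) \<and>
     (\<integral>\<^sup>+ s. ennreal (s / (1 + s)) \<partial>\<mu>) < \<infinity>"

definition bernstein_fun :: "real \<Rightarrow> real \<Rightarrow> real measure \<Rightarrow> complex \<Rightarrow> complex" where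
  "bernstein_fun a b \<mu> z =
     complex_of_real a + complex_of_real b * z +
     (\<integral> s. (1 - exp (- (complex_of_real s * z))) \<partial>\<mu>)"

definition rate_fun :: "real \<Rightarrow> real \<Rightarrow> real measure \<Rightarrow> real \<Rightarrow> real" where
  "rate_fun a b \<mu> t = a / 2 + b / t + (\<integral> s. min (s / t) 1 \<partial>\<mu>)"

end

theory Submission
  imports Defs
begin

lemma exp_diff_le_norm:
  fixes w :: complex
  assumes "Re w \<ge> 0"
  shows "cmod (1 - exp (- w)) \<le> cmod w"
proof -
  have "norm ((\<lambda>u. exp (- u)) 0 - (\<lambda>u. exp (- u)) w) \<le> 1 * norm (0 - w)"
  proof (rule field_differentiable_bound[OF convex_halfspace_Re_ge[of 0]])
    fix u :: complex assume "u \<in> {x. 0 \<le> Re x}"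
    show "((\<lambda>u. exp (- u)) has_field_derivative (- exp (- u))) (at u within {x. 0 \<le> Re x})"
      by (auto intro!: derivative_eq_intros)
  next
    fix u :: complex assume "u \<in> {x. 0 \<le> Re x}"
    then show "norm (- exp (- u)) \<le> 1" by (simp add: norm_exp)
  qed (use assms in auto)
  then show ?thesis by simp
qed

lemma exp_diff_le_2:
  fixes w :: complex
  assumes "Re w \<ge> 0"
  shows "cmod (1 - exp (- w)) \<le> 2"
proof -
  have "cmod (1 - exp (- w)) \<le> cmod 1 + cmod (exp (- w))" by (rule norm_triangle_ineq4)
  also have "cmod (exp (- w)) \<le> 1" using assms by (simp add: norm_exp)
  finally show ?thesis by simp
qed

lemma exp_lower:
  fixes v :: real
  assumes "v \<ge> 0"
  shows "min v 1 / 2 \<le> 1 - exp (- v)"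
proof -
  have "1 + v \<le> exp v" by (rule exp_ge_add_one_self)
  then have "exp (- v) \<le> 1 / (1 + v)" using assms
    by (simp add: exp_minus divide_simps)
  then have "v / (1 + v) \<le> 1 - exp (- v)" using assms
    by (simp add: divide_simps) (simp add: algebra_simps)
  moreover have "min v 1 / 2 \<le> v / (1 + v)" using assms
    by (auto simp: divide_simps min_def intro!: mult_left_mono)
  ultimately show ?thesis by linarith
qed


lemma ar1: "s \<le> 1 \<Longrightarrow> 0 < s \<Longrightarrow> (c::real) \<ge> 0 \<Longrightarrow> s * c \<le> 2 * c * (s / (1 + s))"
proof -
  assume a: "s \<le> 1" "0 < s" "c \<ge> 0"
  have "s * c * (1 + s) \<le> s * c * 2" using a by (intro mult_left_mono) auto
  then show ?thesis using a by (simp add: divide_simps algebra_simps)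
qed
lemma ar2: "s \<le> 1 \<Longrightarrow> 0 < (s::real) \<Longrightarrow> t > 0 \<Longrightarrow> s / t \<le> 2 / t * (s / (1 + s))"
  using ar1[of s "1 / t"] by simp
lemma ar3: "t > 0 \<Longrightarrow> s > 0 \<Longrightarrow> t * cz \<le> \<beta> \<Longrightarrow> s * cz \<le> \<beta> * (s / (t::real))"
proof -
  assume a: "t > 0" "s > 0" "t * cz \<le> \<beta>"
  have "s * (t * cz) \<le> s * \<beta>" using a by (intro mult_left_mono) auto
  then show ?thesis using a by (simp add: divide_simps algebra_simps)
qed
lemma ar4: "t > 0 \<Longrightarrow> s > 0 \<Longrightarrow> \<alpha> \<le> t * x \<Longrightarrow> \<alpha> * (s / t) \<le> s * (x::real)"
proof -
  assume a: "t > 0" "s > 0" "\<alpha> \<le> t * x"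
  have "s * \<alpha> \<le> s * (t * x)" using a by (intro mult_left_mono) auto
  then show ?thesis using a by (simp add: divide_simps algebra_simps)
qed

lemma triple_facts:
  assumes "bernstein_triple a b \<mu>"
  shows "space \<mu> = UNIV" "AE s in \<mu>. s > 0"
    "\<And>f. f \<in> borel_measurable borel \<Longrightarrow> f \<in> borel_measurable \<mu>"
    "integrable \<mu> (\<lambda>s. s / (1 + s))"
proof -
  have S: "sets \<mu> = sets borel" and N: "emeasure \<mu> {..0} = 0"
    and F: "(\<integral>\<^sup>+ s. ennreal (s / (1 + s)) \<partial>\<mu>) < \<infinity>"
    using assms by (auto simp: bernstein_triple_def)
  show sp: "space \<mu> = UNIV" using sets_eq_imp_space_eq[OF S] by simp
  have "{..0::real} \<in> sets \<mu>" unfolding S by simp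
  with N have N0: "{..0::real} \<in> null_sets \<mu>" by (rule null_setsI)
  have "{x \<in> space \<mu>. \<not> 0 < x} \<subseteq> {..0}" by auto
  with N0 show ae: "AE s in \<mu>. s > 0" by (rule AE_I')
  show meas: "\<And>f. f \<in> borel_measurable borel \<Longrightarrow> f \<in> borel_measurable \<mu>"
    by (subst measurable_cong_sets[OF S refl]) assumption
  show "integrable \<mu> (\<lambda>s. s / (1 + s))"
  proof (rule integrableI_nonneg)
    show "(\<lambda>s. s / (1 + s)) \<in> borel_measurable \<mu>" by (rule meas) measurable
    show "AE x in \<mu>. 0 \<le> x / (1 + x)" using ae by eventually_elim auto
  qed (use F in auto)
qed

theorem proposition4p2:
  fixes \<alpha> \<beta> :: real
  assumes "0 < \<alpha>" and "\<alpha> \<le> \<beta>"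
  shows "\<exists>c0 c1. c0 > 0 \<and> c1 > 0 \<and>
    (\<forall>a b \<mu>. bernstein_triple a b \<mu> \<longrightarrow>
      (\<forall>t z. t > 0 \<and> Re z > 0 \<and> \<alpha> \<le> t * Re z \<and> t * Re z \<le> t * cmod z \<and> t * cmod z \<le> \<beta> \<longrightarrow>
         c0 * rate_fun a b \<mu> t \<le> cmod (bernstein_fun a b \<mu> z) \<and>
         cmod (bernstein_fun a b \<mu> z) \<le> c1 * rate_fun a b \<mu> t))"
proof (intro exI conjI allI impI)
  define c0 where "c0 = min \<alpha> 1 / 2"
  define c1 where "c1 = max 2 \<beta>"
  show c0pos: "c0 > 0" using assms by (simp add: c0_def)
  show c1pos: "c1 > 0" by (simp add: c1_def)
  fix a b :: real and \<mu> :: "real measure" and t :: real and z :: complex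
  assume tr: "bernstein_triple a b \<mu>"
  assume tz: "t > 0 \<and> Re z > 0 \<and> \<alpha> \<le> t * Re z \<and> t * Re z \<le> t * cmod z \<and> t * cmod z \<le> \<beta>"
  then have t: "t > 0" and x: "Re z > 0" and ax: "\<alpha> \<le> t * Re z" and zb: "t * cmod z \<le> \<beta>"
    by auto
  have ab: "a \<ge> 0" "b \<ge> 0" using tr by (auto simp: bernstein_triple_def)
  note TF = triple_facts[OF tr]
  define F where "F = (\<lambda>s::real. 1 - exp (- (complex_of_real s * z)))"
  define M where "M = (\<lambda>s::real. min (s / t) 1)"
  have Fb: "cmod (F s) \<le> min (s * cmod z) 2" if "s > 0" for s
  proof -
    have "Re (complex_of_real s * z) \<ge> 0" using that x by simp
    then show ?thesis
      using exp_diff_le_norm[of "complex_of_real s * z"] exp_diff_le_2[of "complex_of_real s * z"]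
        that by (simp add: F_def norm_mult)
  qed
  have intF: "integrable \<mu> F"
  proof (rule Bochner_Integration.integrable_bound[where f="\<lambda>s. (2 * cmod z + 4) * (s / (1 + s))"])
    show "integrable \<mu> (\<lambda>s. (2 * cmod z + 4) * (s / (1 + s)))"
      by (intro integrable_mult_right TF(4))
    show "F \<in> borel_measurable \<mu>" unfolding F_def by (rule TF(3)) measurable
    show "AE s in \<mu>. norm (F s) \<le> norm ((2 * cmod z + 4) * (s / (1 + s)))"
      using TF(2)
    proof eventually_elim
      case (elim s)
      have "min (s * cmod z) 2 \<le> (2 * cmod z + 4) * (s / (1 + s))"
      proof (cases "s \<le> 1")
        case True
        have "s * cmod z \<le> 2 * cmod z * (s / (1 + s))"
          using True elim by (intro ar1) auto
        also have "\<dots> \<le> (2 * cmod z + 4) * (s / (1 + s))"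
          using elim by (intro mult_right_mono) auto
        finally show ?thesis by linarith
      next
        case False
        have "2 \<le> 4 * (s / (1 + s))" using False by (auto simp: divide_simps)
        also have "\<dots> \<le> (2 * cmod z + 4) * (s / (1 + s))"
          using elim by (intro mult_right_mono) auto
        finally show ?thesis by linarith
      qed
      from order_trans[OF Fb[OF elim] this] show ?case using elim by simp
    qed
  qed
  have intM: "integrable \<mu> M"
  proof (rule Bochner_Integration.integrable_bound[where f="\<lambda>s. (2 / t + 2) * (s / (1 + s))"])
    show "integrable \<mu> (\<lambda>s. (2 / t + 2) * (s / (1 + s)))"
      by (intro integrable_mult_right TF(4))
    show "M \<in> borel_measurable \<mu>" unfolding M_def by (rule TF(3)) measurable
    show "AE s in \<mu>. norm (M s) \<le> norm ((2 / t + 2) * (s / (1 + s)))"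
      using TF(2)
    proof eventually_elim
      case (elim s)
      have "M s \<le> (2 / t + 2) * (s / (1 + s))"
      proof (cases "s \<le> 1")
        case True
        have "s / t \<le> 2 / t * (s / (1 + s))"
          using True elim t by (intro ar2) auto
        also have "\<dots> \<le> (2 / t + 2) * (s / (1 + s))"
          using elim by (intro mult_right_mono) auto
        finally show ?thesis unfolding M_def by linarith
      next
        case False
        have "1 \<le> 2 * (s / (1 + s))" using False by (auto simp: divide_simps)
        also have "\<dots> \<le> (2 / t + 2) * (s / (1 + s))"
          using elim t by (intro mult_right_mono) auto
        finally show ?thesis unfolding M_def by linarith
      qed
      moreover have "M s \<ge> 0" using elim t by (simp add: M_def)
      ultimately show ?case using elim t by simp
    qed
  qed
  have g_eq: "bernstein_fun a b \<mu> z = complex_of_real a + complex_of_real b * z + integral\<^sup>L \<mu> F"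
    by (simp add: bernstein_fun_def F_def)
  have r_eq: "rate_fun a b \<mu> t = a / 2 + b / t + integral\<^sup>L \<mu> M"
    by (simp add: rate_fun_def M_def)
  have n1: "cmod (complex_of_real a + complex_of_real b * z + integral\<^sup>L \<mu> F)
        \<le> cmod (complex_of_real a + complex_of_real b * z) + cmod (integral\<^sup>L \<mu> F)"
    by (rule norm_triangle_ineq)
  have n2: "cmod (complex_of_real a + complex_of_real b * z)
        \<le> cmod (complex_of_real a) + cmod (complex_of_real b * z)"
    by (rule norm_triangle_ineq)
  have n3: "cmod (complex_of_real a) = a" using ab by simp
  have n4: "cmod (complex_of_real b * z) = b * cmod z" using ab by (simp add: norm_mult)
  have n5: "cmod (integral\<^sup>L \<mu> F) \<le> integral\<^sup>L \<mu> (\<lambda>s. cmod (F s))"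
    by (rule integral_norm_bound)
  have n6: "integral\<^sup>L \<mu> (\<lambda>s. cmod (F s)) \<le> integral\<^sup>L \<mu> (\<lambda>s. c1 * M s)"
  proof (rule integral_mono_AE)
    show "integrable \<mu> (\<lambda>s. cmod (F s))" using intF by auto
    show "integrable \<mu> (\<lambda>s. c1 * M s)" using intM by auto
    show "AE s in \<mu>. cmod (F s) \<le> c1 * M s" using TF(2)
    proof eventually_elim
      case (elim s)
      have sz: "s * cmod z \<le> \<beta> * (s / t)"
        using zb elim t by (intro ar3) auto
      show ?case
      proof (cases "s / t \<le> 1")
        case True
        have "cmod (F s) \<le> \<beta> * (s / t)" using Fb[OF elim] sz by linarith
        also have "\<dots> \<le> c1 * (s / t)" using elim t by (intro mult_right_mono) (auto simp: c1_def)
        finally show ?thesis using True by (simp add: M_def)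
      next
        case False
        have "cmod (F s) \<le> 2" using Fb[OF elim] by simp
        then have "cmod (F s) \<le> c1" by (simp add: c1_def)
        then show ?thesis using False by (simp add: M_def)
      qed
    qed
  qed
  have n7: "integral\<^sup>L \<mu> (\<lambda>s. c1 * M s) = c1 * integral\<^sup>L \<mu> M" by simp
  have up: "cmod (bernstein_fun a b \<mu> z) \<le> a + b * cmod z + c1 * integral\<^sup>L \<mu> M"
    unfolding g_eq using n1 n2 n3 n4 n5 n6 n7 by linarith
  have "cmod z \<le> \<beta> / t" using zb t by (simp add: pos_le_divide_eq mult.commute)
  also have "\<dots> \<le> c1 / t" using t by (intro divide_right_mono) (auto simp: c1_def)
  finally have "b * cmod z \<le> b * (c1 / t)" using ab by (intro mult_left_mono) auto
  moreover have "b * (c1 / t) = c1 * (b / t)" by simp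
  moreover have "a \<le> c1 * (a / 2)"
  proof -
    have "2 * (a / 2) \<le> c1 * (a / 2)" using ab by (intro mult_right_mono) (auto simp: c1_def)
    then show ?thesis by simp
  qed
  moreover have "c1 * rate_fun a b \<mu> t = c1 * (a / 2) + c1 * (b / t) + c1 * integral\<^sup>L \<mu> M"
    unfolding r_eq by (simp add: distrib_left)
  ultimately show "cmod (bernstein_fun a b \<mu> z) \<le> c1 * rate_fun a b \<mu> t"
    using up by linarith
  have "integral\<^sup>L \<mu> (\<lambda>s. c0 * M s) \<le> integral\<^sup>L \<mu> (\<lambda>s. Re (F s))"
  proof (rule integral_mono_AE)
    show "integrable \<mu> (\<lambda>s. c0 * M s)" using intM by auto
    show "integrable \<mu> (\<lambda>s. Re (F s))" using intF by auto
    show "AE s in \<mu>. c0 * M s \<le> Re (F s)" using TF(2)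
    proof eventually_elim
      case (elim s)
      have "c0 * M s \<le> min (s * Re z) 1 / 2"
      proof -
        have m1: "min \<alpha> 1 * M s \<le> 1"
          using assms elim t by (intro mult_le_one) (auto simp: M_def)
        have "min \<alpha> 1 * M s \<le> \<alpha> * (s / t)"
          using assms elim t by (intro mult_mono) (auto simp: M_def)
        also have "\<dots> \<le> s * Re z"
          using ax elim t by (intro ar4) auto
        finally have "min \<alpha> 1 * M s \<le> min (s * Re z) 1" using m1 by simp
        then show ?thesis by (simp add: c0_def)
      qed
      also have "\<dots> \<le> 1 - exp (- (s * Re z))" using elim x by (intro exp_lower) simp
      also have "\<dots> \<le> Re (F s)"
        using abs_Re_le_cmod[of "exp (- (complex_of_real s * z))"]
        by (simp add: F_def norm_exp)
      finally show ?case .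
    qed
  qed
  then have lowI: "c0 * integral\<^sup>L \<mu> M \<le> Re (integral\<^sup>L \<mu> F)"
    using intF by simp
  have "c0 \<le> \<alpha>" using assms by (simp add: c0_def)
  then have "c0 / t \<le> Re z" using ax t by (simp add: pos_divide_le_eq mult.commute)
  then have "b * (c0 / t) \<le> b * Re z" using ab by (intro mult_left_mono) auto
  moreover have "b * (c0 / t) = c0 * (b / t)" by simp
  moreover have "c0 * (a / 2) \<le> a"
  proof -
    have "c0 * (a / 2) \<le> 1 * (a / 2)" using ab by (intro mult_right_mono) (auto simp: c0_def)
    then show ?thesis using ab by simp
  qed
  moreover have "Re (bernstein_fun a b \<mu> z) = a + b * Re z + Re (integral\<^sup>L \<mu> F)"
    unfolding g_eq by simp
  moreover have "Re (bernstein_fun a b \<mu> z) \<le> cmod (bernstein_fun a b \<mu> z)"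
    by (rule complex_Re_le_cmod)
  moreover have "c0 * rate_fun a b \<mu> t = c0 * (a / 2) + c0 * (b / t) + c0 * integral\<^sup>L \<mu> M"
    unfolding r_eq by (simp add: distrib_left)
  ultimately show "c0 * rate_fun a b \<mu> t \<le> cmod (bernstein_fun a b \<mu> z)"
    using lowI by linarith
qed

end
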